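(* Consider the algorithm described in the context. Suppose: (i) $\|\hat H_k\|\leq\kappa_H$ for all $k$, some $\kappa_H\geq1$; (ii) $f$ is bounded below by $f_{\mathrm{low}}$, twice continuously differentiable with $L_H$-Lipschitz Hessian, and $\|\nabla^2 f(\mathbf{x}_k)\|\leq M$ for all $k$; (iii) every step satisfies $\hat{m}_k(\mathbf{0}) - \hat{m}_k(\hat{\mathbf{s}}_k) \geq \kappa_s \max\left(\|\hat{\mathbf{g}}_k\| \min\left(\Delta_k, \frac{\|\hat{\mathbf{g}}_k\|}{\max(\|\hat{H}_k\|,1)}\right), \hat{\tau}^m_k\Delta_k^2\right)$ for some $\kappa_s>0$ independent of $k$. Let $\epsilon>0$ with $\theta := (1-\alpha)^2 - \frac{4M(r-1)\alpha^2}{\epsilon(1-\alpha)^2}>0$, and let $K\geq0$. If $\sigma_k\geq\epsilon$ for all $k\leq K$, then $\#(\mathcal{A}\cap\mathcal{D}^C(\Delta)\cap\mathcal{U})=0$ for all $\Delta\leq c_2\epsilon$, where $$c_2:=\frac{\min(1-\alpha,(1-\alpha)^2,\theta)}{\kappa_\sigma+c_0^{-1}},\quad \kappa_\sigma:=\max(\kappa_{\mathrm{eg}}\Delta_{\max},\kappa_{\mathrm{eh}}),\quad c_0:=\min\left(\frac{1}{\mu},\frac{1}{\kappa_H},\frac{\kappa_s(1-\eta)}{\kappa_{\mathrm{ef}}\Delta_{\max}},\frac{\kappa_s(1-\eta)}{\kappa_{\mathrm{ef}}}\right).$$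
   Context: Algorithm: Let $f:\mathbb{R}^n\to\mathbb{R}$. Fix $\mathbf{x}_0$, $p\in\{1,\ldots,n\}$, $0<\Delta_0\leq\Delta_{\max}$, $0<\gamma_{\mathrm{dec}}<1<\gamma_{\mathrm{inc}}$, $\eta\in(0,1)$, $\mu>0$. For $k=0,1,\ldots$: select a random $P_k\in\mathbb{R}^{n\times p}$; build $\hat m_k(\hat{\mathbf{s}})=f(\mathbf{x}_k)+\hat{\mathbf{g}}_k^T\hat{\mathbf{s}}+\frac12\hat{\mathbf{s}}^T\hat H_k\hat{\mathbf{s}}$ ($\hat H_k$ symmetric) which is $P_k$-fully quadratic: constants $\kappa_{\mathrm{ef}},\kappa_{\mathrm{eg}},\kappa_{\mathrm{eh}}>0$ independent of $k$ with $|f(\mathbf{x}_k+P_k\hat{\mathbf{s}})-\hat m_k(\hat{\mathbf{s}})|\leq\kappa_{\mathrm{ef}}\Delta_k^3$, $\|P_k^T\nabla f(\mathbf{x}_k+P_k\hat{\mathbf{s}})-\nabla\hat m_k(\hat{\mathbf{s}})\|\leq\kappa_{\mathrm{eg}}\Delta_k^2$, $\|P_k^T\nabla^2 f(\mathbf{x}_k+P_k\hat{\mathbf{s}})P_k-\hat H_k\|\leq\kappa_{\mathrm{eh}}\Delta_k$ for all $\|\hat{\mathbf{s}}\|\leq\Delta_k$; compute a step $\hat{\mathbf{s}}_k$ with $\|\hat{\mathbf{s}}_k\|\leq\Delta_k$; let $R_k:=\frac{f(\mathbf{x}_k)-f(\mathbf{x}_k+P_k\hat{\mathbf{s}}_k)}{\hat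 m_k(\mathbf{0})-\hat m_k(\hat{\mathbf{s}}_k)}$, $\hat\tau^m_k:=\max(-\lambda_{\min}(\hat H_k),0)$, $\hat\sigma^m_k:=\max(\|\hat{\mathbf{g}}_k\|,\hat\tau^m_k)$; if $R_k\geq\eta$ and $\hat\sigma^m_k\geq\mu\Delta_k$ the iteration is successful: $\mathbf{x}_{k+1}=\mathbf{x}_k+P_k\hat{\mathbf{s}}_k$, $\Delta_{k+1}=\min(\gamma_{\mathrm{inc}}\Delta_k,\Delta_{\max})$; otherwise unsuccessful: $\mathbf{x}_{k+1}=\mathbf{x}_k$, $\Delta_{k+1}=\gamma_{\mathrm{dec}}\Delta_k$. Criticality: $\sigma_k:=\max(\|\nabla f(\mathbf{x}_k)\|,\max(-\lambda_{\min}(\nabla^2 f(\mathbf{x}_k)),0))$. Well-alignment: write $\nabla^2 f(\mathbf{x}_k)=\sum_{i=1}^r\lambda_i\mathbf{v}_i\mathbf{v}_i^T$, $\lambda_1\geq\cdots\geq\lambda_r$, $r=\operatorname{rank}(\nabla^2 f(\mathbf{x}_k))$, $\mathbf{v}_i$ orthonormal, $\hat{\mathbf{v}}_i:=P_k^T\mathbf{v}_i$; $P_k$ is well-aligned if $\|P_k\|\leq P_{\max}$, $\|P_k^T\nabla f(\mathbf{x}_k)\|\geq(1-\alpha)\|\nabla f(\mathbf{x}_k)\|$, $\|\hat{\mathbf{v}}_r\|\geq1-\alpha$, and $(\hat{\mathbf{v}}_i^T\hat{\mathbf{v}}_r)^2\leq4\alpha^2$ for $i=1,\ldots,r-1$,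 for fixed $\alpha\in(0,1)$, $P_{\max}>0$ independent of $k$. (The paper writes $r$ without an index $k$; $\theta$ is defined with this $r$.) Index sets, for fixed $K$: $\mathcal{A}$ = iterations in $\{0,\ldots,K\}$ at which $P_k$ is well-aligned; $\mathcal{U}$ = unsuccessful iterations in $\{0,\ldots,K\}$; $\mathcal{D}^C(\Delta)$ = iterations in $\{0,\ldots,K\}$ with $\Delta_k<\Delta$; $\#$ denotes cardinality. *)

theory Defs
  imports "HOL-Analysis.Analysis"
begin

definition matnorm :: "real^'m^'n \<Rightarrow> real" where
  "matnorm A = onorm (\<lambda>v. A *v v)"

definition outer :: "real^'n \<Rightarrow> real^'m \<Rightarrow> real^'m^'n" where
  "outer u v = (\<chi> i j. u $ i * v $ j)"

definition lambda_min :: "real^'n^'n \<Rightarrow> real" where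
  "lambda_min A = Min {l. \<exists>v. v \<noteq> 0 \<and> A *v v = l *\<^sub>R v}"

definition mhat :: "real \<Rightarrow> real^'p \<Rightarrow> real^'p^'p \<Rightarrow> real^'p \<Rightarrow> real" where
  "mhat fx g Hh s = fx + g \<bullet> s + 1/2 * (s \<bullet> (Hh *v s))"

definition tau_m :: "real^'p^'p \<Rightarrow> real" where
  "tau_m Hh = max (- lambda_min Hh) 0"

definition sigma_m :: "real^'p \<Rightarrow> real^'p^'p \<Rightarrow> real" where
  "sigma_m g Hh = max (norm g) (tau_m Hh)"

definition crit :: "real^'n \<Rightarrow> real^'n^'n \<Rightarrow> real" where
  "crit gx Hx = max (norm gx) (max (- lambda_min Hx) 0)"

text \<open>Well-alignment of P w.r.t. gradient gx and the eigenvectors v 1, ..., v r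
  of a rank-r eigendecomposition of the Hessian (eigenvalues ordered decreasingly).\<close>
definition well_aligned :: "real \<Rightarrow> real \<Rightarrow> real^'n \<Rightarrow> nat \<Rightarrow> (nat \<Rightarrow> real^'n) \<Rightarrow> real^'p^'n \<Rightarrow> bool" where
  "well_aligned \<alpha> Pmax gx r v P \<longleftrightarrow>
     matnorm P \<le> Pmax \<and>
     norm (transpose P *v gx) \<ge> (1 - \<alpha>) * norm gx \<and>
     (r \<ge> 1 \<longrightarrow> norm (transpose P *v v r) \<ge> 1 - \<alpha>) \<and>
     (\<forall>i\<in>{1..<r}. ((transpose P *v v i) \<bullet> (transpose P *v v r))^2 \<le> 4 * \<alpha>^2)"

end

theory Submission
  imports Defs
begin


definition eigs :: "real^'n^'n \<Rightarrow> real set" where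
  "eigs A = {l. \<exists>v. v \<noteq> 0 \<and> A *v v = l *\<^sub>R v}"

lemma sym_dot:
  fixes A :: "real^'n^'n"
  assumes "transpose A = A"
  shows "u \<bullet> (A *v w) = w \<bullet> (A *v u)"
proof -
  have "u \<bullet> (A *v w) = (u v* A) \<bullet> w" by (simp add: dot_lmul_matrix)
  also have "u v* A = transpose A *v u" by simp
  also have "\<dots> = A *v u" using assms by simp
  finally show ?thesis by (simp add: inner_commute)
qed

lemma matnorm_bound:
  fixes A :: "real^'m^'n"
  shows "norm (A *v u) \<le> matnorm A * norm u"
  unfolding matnorm_def by (rule onorm) simp

lemma matnorm_nonneg:
  fixes A :: "real^'m^'n"
  shows "0 \<le> matnorm A"
  unfolding matnorm_def by (rule onorm_pos_le) simp

lemma quad_bound: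
  fixes A :: "real^'n^'n"
  shows "\<bar>u \<bullet> (A *v u)\<bar> \<le> matnorm A * norm u ^ 2"
proof -
  have "\<bar>u \<bullet> (A *v u)\<bar> \<le> norm u * norm (A *v u)" by (rule Cauchy_Schwarz_ineq2)
  also have "\<dots> \<le> norm u * (matnorm A * norm u)"
    by (rule mult_left_mono[OF matnorm_bound]) simp
  finally show ?thesis by (simp add: power2_eq_square mult_ac)
qed

lemma eigs_finite:
  fixes A :: "real^'n^'n"
  assumes sym: "transpose A = A"
  shows "finite (eigs A)"
proof -
  define e where "e l = (SOME v. v \<noteq> 0 \<and> A *v v = l *\<^sub>R v)" for l
  have e: "e l \<noteq> 0 \<and> A *v e l = l *\<^sub>R e l" if "l \<in> eigs A" for l
    using that unfolding eigs_def e_def by (rule CollectE) (rule someI_ex)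
  have orth: "e l \<bullet> e l' = 0" if "l \<in> eigs A" "l' \<in> eigs A" "l \<noteq> l'" for l l'
  proof -
    have "l * (e l \<bullet> e l') = e l' \<bullet> (A *v e l)" using e[OF that(1)] by (simp add: inner_commute)
    also have "\<dots> = e l \<bullet> (A *v e l')" using sym_dot[OF sym] by metis
    also have "\<dots> = l' * (e l \<bullet> e l')" using e[OF that(2)] by simp
    finally show ?thesis using that(3) by simp
  qed
  have inj: "inj_on e (eigs A)"
  proof (rule inj_onI)
    fix l l' assume h: "l \<in> eigs A" "l' \<in> eigs A" "e l = e l'"
    show "l = l'"
    proof (rule ccontr)
      assume "l \<noteq> l'"
      then have "e l \<bullet> e l = 0" using orth[OF h(1,2)] h(3) by simp
      then show False using e[OF h(1)] by simp
    qed
  qed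
  have "pairwise orthogonal (e ` eigs A)"
    unfolding pairwise_def orthogonal_def using orth by (metis imageE)
  moreover have "0 \<notin> e ` eigs A" using e by auto
  ultimately have "independent (e ` eigs A)" by (rule pairwise_orthogonal_independent)
  then have "finite (e ` eigs A)" by (rule independent_imp_finite)
  then show ?thesis using inj finite_imageD by blast
qed

lemma eigs_rayleigh:
  fixes A :: "real^'n^'n"
  assumes sym: "transpose A = A" and u0: "u \<noteq> 0"
  shows "\<exists>l\<in>eigs A. l * norm u ^ 2 \<le> u \<bullet> (A *v u)"
proof -
  define Q where "Q w = w \<bullet> (A *v w)" for w :: "real^'n"
  have cA: "continuous_on UNIV (\<lambda>w. A *v w)" by (rule linear_continuous_on) simp
  have "continuous_on UNIV Q" unfolding Q_def
    by (rule continuous_on_inner[OF continuous_on_id cA])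
  then have cQ: "continuous_on (sphere 0 1) Q" by (rule continuous_on_subset) simp
  have ne: "sphere (0::real^'n) 1 \<noteq> {}" using u0
    by (metis norm_sgn sgn_zero_iff mem_sphere_0 empty_iff)
  obtain u0 where u0s: "u0 \<in> sphere 0 1" and mn: "\<And>y. y \<in> sphere 0 1 \<Longrightarrow> Q u0 \<le> Q y"
    using continuous_attains_inf[OF compact_sphere ne cQ] by blast
  define m where "m = Q u0"
  have Qs: "Q (c *\<^sub>R w) = c^2 * Q w" for c w
    unfolding Q_def by (simp add: matrix_vector_mult_scaleR power2_eq_square)
  have psd: "m * norm w ^ 2 \<le> Q w" for w
  proof (cases "w = 0")
    case True then show ?thesis by (simp add: Q_def)
  next
    case False
    have "sgn w \<in> sphere 0 1" using False by (simp add: norm_sgn)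
    then have "m \<le> Q (sgn w)" using mn m_def by blast
    also have "Q (sgn w) = (inverse (norm w))^2 * Q w" using Qs by (simp add: sgn_div_norm)
    finally have "m \<le> (inverse (norm w))^2 * Q w" .
    then have "m * norm w^2 \<le> (inverse (norm w))^2 * Q w * norm w^2" by (rule mult_right_mono) simp
    also have "\<dots> = Q w" using False by (simp add: power_inverse)
    finally show ?thesis .
  qed
  define B where "B w = A *v w - m *\<^sub>R w" for w
  have Bq: "w \<bullet> B w = Q w - m * norm w ^ 2" for w
    by (simp add: B_def Q_def inner_diff_right power2_norm_eq_inner)
  have Bpsd: "0 \<le> w \<bullet> B w" for w using psd[of w] Bq[of w] by simp
  have nu0: "norm u0 = 1" using u0s by simp
  have B0: "u0 \<bullet> B u0 = 0" using Bq[of u0] nu0 m_def by simp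
  have Bsym: "a \<bullet> B b = b \<bullet> B a" for a b
    unfolding B_def using sym_dot[OF sym, of a b] by (simp add: inner_diff_right inner_commute)
  have Blin: "B (a + t *\<^sub>R b) = B a + t *\<^sub>R B b" for a b t
    unfolding B_def by (simp add: matrix_vector_right_distrib matrix_vector_mult_scaleR algebra_simps)
  define z where "z = B u0"
  define a where "a = z \<bullet> z"
  define c where "c = z \<bullet> B z"
  have expand: "(u0 + t *\<^sub>R z) \<bullet> B (u0 + t *\<^sub>R z) = 2 * t * a + t^2 * c" for t
  proof -
    have "(u0 + t *\<^sub>R z) \<bullet> B (u0 + t *\<^sub>R z) = u0 \<bullet> B u0 + t * (u0 \<bullet> B z) + t * (z \<bullet> B u0) + t^2 * (z \<bullet> B z)"
      unfolding Blin by (simp add: inner_add_left inner_add_right power2_eq_square inner_scaleR_left inner_scaleR_right distrib_left)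
    also have "u0 \<bullet> B z = z \<bullet> B u0" by (rule Bsym)
    finally show ?thesis using B0 by (simp add: a_def c_def z_def)
  qed
  have c0: "0 \<le> c" using Bpsd c_def by simp
  have "a = 0"
  proof (rule ccontr)
    assume "a \<noteq> 0"
    then have apos: "a > 0" unfolding a_def by simp
    define t where "t = - a / (c + 1)"
    have "0 \<le> 2 * t * a + t^2 * c" using Bpsd expand by metis
    moreover have "2 * t * a + t^2 * c < 0"
    proof -
      have "2 * t * a + t^2 * c = a^2 / (c+1) * (c / (c + 1) - 2)"
        using c0 unfolding t_def by (simp add: power2_eq_square divide_simps) (simp add: algebra_simps)
      moreover have "c / (c+1) < 2" using c0 by (simp add: divide_less_eq)
      moreover have "a^2 / (c+1) > 0" using apos c0 by simp
      ultimately show ?thesis by (metis mult_pos_neg diff_less_0_iff_less)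
    qed
    ultimately show False by simp
  qed
  then have "B u0 = 0" unfolding a_def z_def by simp
  then have "A *v u0 = m *\<^sub>R u0" unfolding B_def by simp
  moreover have "u0 \<noteq> 0" using nu0 by auto
  ultimately have "m \<in> eigs A" unfolding eigs_def by blast
  moreover have "m * norm u ^ 2 \<le> u \<bullet> (A *v u)" using psd Q_def by simp
  ultimately show ?thesis by blast
qed

lemma lambda_min_le:
  fixes A :: "real^'n^'n"
  assumes sym: "transpose A = A" and u0: "u \<noteq> 0"
  shows "lambda_min A * norm u ^ 2 \<le> u \<bullet> (A *v u)"
proof -
  obtain l where l: "l \<in> eigs A" "l * norm u ^ 2 \<le> u \<bullet> (A *v u)"
    using eigs_rayleigh[OF assms] by blast
  have "lambda_min A \<le> l" unfolding lambda_min_def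
    using Min_le[OF eigs_finite[OF sym] l(1)] by (simp add: eigs_def)
  then have "lambda_min A * norm u ^ 2 \<le> l * norm u ^ 2" by (simp add: mult_right_mono)
  then show ?thesis using l(2) by simp
qed

lemma lambda_min_in:
  fixes A :: "real^'n^'n"
  assumes sym: "transpose A = A"
  shows "lambda_min A \<in> eigs A"
proof -
  have "(1::real^'n) \<noteq> 0" by (simp add: vec_eq_iff)
  then obtain l where "l \<in> eigs A" using eigs_rayleigh[OF sym] by blast
  then have "eigs A \<noteq> {}" by blast
  then show ?thesis unfolding lambda_min_def
    using Min_in[OF eigs_finite[OF sym]] by (simp add: eigs_def)
qed



lemma outer_sum_comp:
  "(\<Sum>i\<in>I. lam i *\<^sub>R outer (v i) (v i)) $ a $ b = (\<Sum>i\<in>I. lam i * (v i $ a) * (v i $ b :: real))"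
  by (simp add: sum_component outer_def mult.assoc)

lemma outer_sum_mult:
  fixes v :: "nat \<Rightarrow> real^'n"
  shows "(\<Sum>i\<in>I. lam i *\<^sub>R outer (v i) (v i)) *v w = (\<Sum>i\<in>I. (lam i * (v i \<bullet> w)) *\<^sub>R v i)"
proof -
  have "((\<Sum>i\<in>I. lam i *\<^sub>R outer (v i) (v i)) *v w) $ a = (\<Sum>i\<in>I. (lam i * (v i \<bullet> w)) *\<^sub>R v i) $ a" for a
  proof -
    have "((\<Sum>i\<in>I. lam i *\<^sub>R outer (v i) (v i)) *v w) $ a
        = (\<Sum>b\<in>UNIV. (\<Sum>i\<in>I. lam i * (v i $ a) * (v i $ b)) * w $ b)"
      by (simp add: matrix_vector_mult_def sum_component outer_def mult.assoc)
    also have "\<dots> = (\<Sum>b\<in>UNIV. \<Sum>i\<in>I. lam i * (v i $ a) * ((v i $ b) * w $ b))"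
      by (simp add: sum_distrib_right mult.assoc)
    also have "\<dots> = (\<Sum>i\<in>I. \<Sum>b\<in>UNIV. lam i * (v i $ a) * ((v i $ b) * w $ b))"
      by (rule sum.swap)
    also have "\<dots> = (\<Sum>i\<in>I. lam i * (v i $ a) * (v i \<bullet> w))"
      by (simp add: sum_distrib_left[symmetric] inner_vec_def)
    also have "\<dots> = (\<Sum>i\<in>I. (lam i * (v i \<bullet> w)) *\<^sub>R v i) $ a"
      by (simp add: sum_component mult_ac)
    finally show ?thesis .
  qed
  then show ?thesis by (simp add: vec_eq_iff)
qed

lemma outer_sum_sym:
  fixes v :: "nat \<Rightarrow> real^'n"
  shows "transpose (\<Sum>i\<in>I. lam i *\<^sub>R outer (v i) (v i)) = (\<Sum>i\<in>I. lam i *\<^sub>R outer (v i) (v i))"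
proof -
  have "transpose (\<Sum>i\<in>I. lam i *\<^sub>R outer (v i) (v i)) $ a $ b = (\<Sum>i\<in>I. lam i *\<^sub>R outer (v i) (v i)) $ a $ b" for a b
  proof -
    have "transpose (\<Sum>i\<in>I. lam i *\<^sub>R outer (v i) (v i)) $ a $ b = (\<Sum>i\<in>I. lam i *\<^sub>R outer (v i) (v i)) $ b $ a"
      by (simp add: transpose_def)
    also have "\<dots> = (\<Sum>i\<in>I. lam i * (v i $ b) * (v i $ a))" by (rule outer_sum_comp)
    also have "\<dots> = (\<Sum>i\<in>I. lam i * (v i $ a) * (v i $ b))" by (intro sum.cong refl) simp
    also have "\<dots> = (\<Sum>i\<in>I. lam i *\<^sub>R outer (v i) (v i)) $ a $ b" by (rule outer_sum_comp[symmetric])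
    finally show ?thesis .
  qed
  then show ?thesis by (simp add: vec_eq_iff)
qed

lemma dotT: "(x::real^'n) \<bullet> ((A::real^'m^'n) *v y) = (transpose A *v x) \<bullet> y"
  by (simp add: dot_lmul_matrix)

lemma dotT': "(x::real^'m) \<bullet> (transpose (A::real^'m^'n) *v y) = (A *v x) \<bullet> y"
  using dotT[of x "transpose A" y] by simp

context
  fixes H :: "real^'n^'n" and lam :: "nat \<Rightarrow> real" and v :: "nat \<Rightarrow> real^'n" and r :: nat
  assumes dec: "H = (\<Sum>i=1..r. lam i *\<^sub>R outer (v i) (v i))"
    and orth: "\<And>i j. i \<in> {1..r} \<Longrightarrow> j \<in> {1..r} \<Longrightarrow> v i \<bullet> v j = (if i = j then 1 else 0)"
begin

lemma Hmult: "H *v w = (\<Sum>i=1..r. (lam i * (v i \<bullet> w)) *\<^sub>R v i)"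
  unfolding dec by (rule outer_sum_mult)

lemma Hsym: "transpose H = H"
  unfolding dec by (rule outer_sum_sym)

lemma Hquad: "w \<bullet> (H *v w) = (\<Sum>i=1..r. lam i * (v i \<bullet> w)^2)"
proof -
  have "w \<bullet> (H *v w) = (\<Sum>i=1..r. lam i * (v i \<bullet> w) * (w \<bullet> v i))"
    by (simp add: Hmult inner_sum_right)
  also have "\<dots> = (\<Sum>i=1..r. lam i * (v i \<bullet> w)^2)"
    by (intro sum.cong refl) (simp add: power2_eq_square inner_commute)
  finally show ?thesis .
qed

lemma Hproj: "j \<in> {1..r} \<Longrightarrow> v j \<bullet> (H *v w) = lam j * (v j \<bullet> w)"
proof -
  assume j: "j \<in> {1..r}"
  have "v j \<bullet> (H *v w) = (\<Sum>i=1..r. lam i * (v i \<bullet> w) * (v j \<bullet> v i))"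
    by (simp add: Hmult inner_sum_right)
  also have "\<dots> = (\<Sum>i=1..r. if i = j then lam j * (v j \<bullet> w) else 0)"
    by (rule sum.cong) (use j orth in auto)
  also have "\<dots> = lam j * (v j \<bullet> w)" using j by simp
  finally show ?thesis .
qed

lemma Heig:
  assumes "w \<noteq> 0" "H *v w = l *\<^sub>R w" "l \<noteq> 0"
  shows "\<exists>j\<in>{1..r}. l = lam j"
proof (rule ccontr)
  assume nj: "\<not> ?thesis"
  have "v j \<bullet> w = 0" if j: "j \<in> {1..r}" for j
  proof -
    have "l * (v j \<bullet> w) = lam j * (v j \<bullet> w)" using Hproj[OF j, of w] assms(2) by simp
    then show ?thesis using nj j by auto
  qed
  then have "H *v w = 0" by (simp add: Hmult)
  then show False using assms by simp
qed

lemma lam_bound: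
  assumes "j \<in> {1..r}"
  shows "lam j \<le> matnorm H"
proof -
  have n1: "norm (v j) = 1" using orth[OF assms assms] by (simp add: norm_eq_sqrt_inner)
  have "lam j = v j \<bullet> (H *v v j)" using Hproj[OF assms, of "v j"] orth[OF assms assms] by simp
  also have "\<dots> \<le> \<bar>v j \<bullet> (H *v v j)\<bar>" by simp
  also have "\<dots> \<le> matnorm H * norm (v j) ^ 2" by (rule quad_bound)
  finally show ?thesis using n1 by simp
qed

end


theorem lemma3p11:
  fixes f :: "real^'n \<Rightarrow> real"
    and grad :: "real^'n \<Rightarrow> real^'n"
    and hess :: "real^'n \<Rightarrow> real^'n^'n"
    and x :: "nat \<Rightarrow> real^'n"
    and P :: "nat \<Rightarrow> real^'p^'n"
    and ghat :: "nat \<Rightarrow> real^'p"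
    and Hhat :: "nat \<Rightarrow> real^'p^'p"
    and shat :: "nat \<Rightarrow> real^'p"
    and \<Delta> :: "nat \<Rightarrow> real"
    and lam :: "nat \<Rightarrow> nat \<Rightarrow> real"
    and v :: "nat \<Rightarrow> nat \<Rightarrow> real^'n"
    and r K :: nat
    and \<Delta>max \<gamma>dec \<gamma>inc \<eta> \<mu> \<kappa>ef \<kappa>eg \<kappa>eh \<kappa>H \<kappa>s flow LH M \<alpha> Pmax \<epsilon> :: real
  assumes p_le_n: "CARD('p) \<le> CARD('n)"
    and Delta0: "0 < \<Delta> 0" "\<Delta> 0 \<le> \<Delta>max"
    and gammas: "0 < \<gamma>dec" "\<gamma>dec < 1" "1 < \<gamma>inc"
    and eta: "0 < \<eta>" "\<eta> < 1"
    and mu: "\<mu> > 0"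
    and kappas: "\<kappa>ef > 0" "\<kappa>eg > 0" "\<kappa>eh > 0"
    and alpha: "0 < \<alpha>" "\<alpha> < 1"
    and Pmax: "Pmax > 0"
    (* f: bounded below, C^2 with L_H-Lipschitz Hessian, Hessian bounded along iterates *)
    and f_low: "\<And>y. f y \<ge> flow"
    and f_grad: "\<And>y. (f has_derivative (\<lambda>h. grad y \<bullet> h)) (at y)"
    and f_hess: "\<And>y. (grad has_derivative (\<lambda>h. hess y *v h)) (at y)"
    and hess_cont: "continuous_on UNIV hess"
    and hess_lip: "\<And>y z. matnorm (hess y - hess z) \<le> LH * norm (y - z)"
    and hess_bnd: "\<And>k. matnorm (hess (x k)) \<le> M"
    (* model: symmetric, P_k-fully quadratic, bounded Hessian *)
    and Hhat_sym: "\<And>k. transpose (Hhat k) = Hhat k"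
    and Hhat_bnd: "\<And>k. matnorm (Hhat k) \<le> \<kappa>H" and kappaH: "\<kappa>H \<ge> 1"
    and fq_f: "\<And>k s. norm s \<le> \<Delta> k \<Longrightarrow>
        \<bar>f (x k + P k *v s) - mhat (f (x k)) (ghat k) (Hhat k) s\<bar> \<le> \<kappa>ef * \<Delta> k ^ 3"
    and fq_g: "\<And>k s. norm s \<le> \<Delta> k \<Longrightarrow>
        norm (transpose (P k) *v grad (x k + P k *v s) - (ghat k + Hhat k *v s)) \<le> \<kappa>eg * \<Delta> k ^ 2"
    and fq_h: "\<And>k s. norm s \<le> \<Delta> k \<Longrightarrow>
        matnorm (transpose (P k) ** hess (x k + P k *v s) ** P k - Hhat k) \<le> \<kappa>eh * \<Delta> k"
    (* step: inside trust region, sufficient decrease *)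
    and step_tr: "\<And>k. norm (shat k) \<le> \<Delta> k"
    and kappa_s: "\<kappa>s > 0"
    and step_dec: "\<And>k. mhat (f (x k)) (ghat k) (Hhat k) 0 - mhat (f (x k)) (ghat k) (Hhat k) (shat k)
        \<ge> \<kappa>s * max (norm (ghat k) * min (\<Delta> k) (norm (ghat k) / max (matnorm (Hhat k)) 1))
                      (tau_m (Hhat k) * \<Delta> k ^ 2)"
    (* iteration updates *)
    and update: "\<And>k. (f (x k) - f (x k + P k *v shat k)) /
          (mhat (f (x k)) (ghat k) (Hhat k) 0 - mhat (f (x k)) (ghat k) (Hhat k) (shat k)) \<ge> \<eta>
        \<and> sigma_m (ghat k) (Hhat k) \<ge> \<mu> * \<Delta> k
      \<Longrightarrow> x (Suc k) = x k + P k *v shat k \<and> \<Delta> (Suc k) = min (\<gamma>inc * \<Delta> k) \<Delta>max"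
    and update': "\<And>k. \<not> ((f (x k) - f (x k + P k *v shat k)) /
          (mhat (f (x k)) (ghat k) (Hhat k) 0 - mhat (f (x k)) (ghat k) (Hhat k) (shat k)) \<ge> \<eta>
        \<and> sigma_m (ghat k) (Hhat k) \<ge> \<mu> * \<Delta> k)
      \<Longrightarrow> x (Suc k) = x k \<and> \<Delta> (Suc k) = \<gamma>dec * \<Delta> k"
    (* eigendecomposition of the Hessian at x_k, rank r *)
    and rank_r: "\<And>k. k \<le> K \<Longrightarrow> rank (hess (x k)) = r"
    and eig_decomp: "\<And>k. k \<le> K \<Longrightarrow>
        hess (x k) = (\<Sum>i=1..r. lam k i *\<^sub>R outer (v k i) (v k i))"
    and eig_order: "\<And>k i j. k \<le> K \<Longrightarrow> 1 \<le> i \<Longrightarrow> i \<le> j \<Longrightarrow> j \<le> r \<Longrightarrow> lam k j \<le> lam k i"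
    and eig_orth: "\<And>k i j. k \<le> K \<Longrightarrow> i \<in> {1..r} \<Longrightarrow> j \<in> {1..r} \<Longrightarrow>
        v k i \<bullet> v k j = (if i = j then 1 else 0)"
    (* epsilon, theta, criticality *)
    and eps: "\<epsilon> > 0"
    and theta_pos: "(1 - \<alpha>)^2 - 4 * M * (real r - 1) * \<alpha>^2 / (\<epsilon> * (1 - \<alpha>)^2) > 0"
    and crit_eps: "\<And>k. k \<le> K \<Longrightarrow> crit (grad (x k)) (hess (x k)) \<ge> \<epsilon>"
  shows "\<forall>D. D \<le> (min (1 - \<alpha>) (min ((1 - \<alpha>)^2)
                 ((1 - \<alpha>)^2 - 4 * M * (real r - 1) * \<alpha>^2 / (\<epsilon> * (1 - \<alpha>)^2))))
               / (max (\<kappa>eg * \<Delta>max) \<kappa>eh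
                  + inverse (min (1 / \<mu>) (min (1 / \<kappa>H)
                      (min (\<kappa>s * (1 - \<eta>) / (\<kappa>ef * \<Delta>max)) (\<kappa>s * (1 - \<eta>) / \<kappa>ef)))))
               * \<epsilon> \<longrightarrow>
      card ({k. k \<le> K \<and> well_aligned \<alpha> Pmax (grad (x k)) r (v k) (P k)}
            \<inter> {k. k \<le> K \<and> \<Delta> k < D}
            \<inter> {k. k \<le> K \<and> \<not> ((f (x k) - f (x k + P k *v shat k)) /
                 (mhat (f (x k)) (ghat k) (Hhat k) 0 - mhat (f (x k)) (ghat k) (Hhat k) (shat k)) \<ge> \<eta>
                 \<and> sigma_m (ghat k) (Hhat k) \<ge> \<mu> * \<Delta> k)}) = 0"
proof (intro allI impI)
  fix D
  define \<theta> where "\<theta> = (1 - \<alpha>)^2 - 4 * M * (real r - 1) * \<alpha>^2 / (\<epsilon> * (1 - \<alpha>)^2)"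
  define c where "c = min (1 - \<alpha>) (min ((1 - \<alpha>)^2) \<theta>)"
  define ks where "ks = max (\<kappa>eg * \<Delta>max) \<kappa>eh"
  define c0 where "c0 = min (1 / \<mu>) (min (1 / \<kappa>H)
                      (min (\<kappa>s * (1 - \<eta>) / (\<kappa>ef * \<Delta>max)) (\<kappa>s * (1 - \<eta>) / \<kappa>ef)))"
  define ic where "ic = inverse c0"
  assume "D \<le> (min (1 - \<alpha>) (min ((1 - \<alpha>)^2)
                 ((1 - \<alpha>)^2 - 4 * M * (real r - 1) * \<alpha>^2 / (\<epsilon> * (1 - \<alpha>)^2))))
               / (max (\<kappa>eg * \<Delta>max) \<kappa>eh
                  + inverse (min (1 / \<mu>) (min (1 / \<kappa>H)
                      (min (\<kappa>s * (1 - \<eta>) / (\<kappa>ef * \<Delta>max)) (\<kappa>s * (1 - \<eta>) / \<kappa>ef)))))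
               * \<epsilon>"
  then have hD: "D \<le> c / (ks + ic) * \<epsilon>"
    unfolding c_def \<theta>_def ks_def ic_def c0_def .
  have Dmax_pos: "0 < \<Delta>max" using Delta0 by linarith
  have Dbnd: "0 < \<Delta> k \<and> \<Delta> k \<le> \<Delta>max" for k
  proof (induction k)
    case 0 then show ?case using Delta0 by simp
  next
    case (Suc k)
    show ?case
    proof (cases "(f (x k) - f (x k + P k *v shat k)) /
          (mhat (f (x k)) (ghat k) (Hhat k) 0 - mhat (f (x k)) (ghat k) (Hhat k) (shat k)) \<ge> \<eta>
        \<and> sigma_m (ghat k) (Hhat k) \<ge> \<mu> * \<Delta> k")
      case True
      then have "\<Delta> (Suc k) = min (\<gamma>inc * \<Delta> k) \<Delta>max" using update by blast
      then show ?thesis using Suc gammas Dmax_pos by auto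
    next
      case False
      then have e: "\<Delta> (Suc k) = \<gamma>dec * \<Delta> k" using update' by blast
      have l: "\<gamma>dec * \<Delta> k \<le> \<Delta> k" using Suc gammas by simp
      have p: "0 < \<gamma>dec * \<Delta> k" using Suc gammas by simp
      show ?thesis using e l p Suc by linarith
    qed
  qed
  have c0pos: "0 < c0" unfolding c0_def using mu kappaH kappa_s eta kappas Dmax_pos by simp
  have icpos: "0 < ic" unfolding ic_def using c0pos by simp
  have kspos: "0 < ks" unfolding ks_def using kappas by simp
  have inv_le: "inverse q \<le> ic" if "c0 \<le> q" for q
    unfolding ic_def using le_imp_inverse_le[OF that c0pos] .
  have mu_ic: "\<mu> \<le> ic" using inv_le[of "1/\<mu>"] unfolding c0_def by simp
  have kH_ic: "\<kappa>H \<le> ic" using inv_le[of "1/\<kappa>H"] unfolding c0_def by simp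
  have kef1: "\<kappa>ef * \<Delta>max \<le> \<kappa>s * (1 - \<eta>) * ic"
  proof -
    have "inverse (\<kappa>s * (1 - \<eta>) / (\<kappa>ef * \<Delta>max)) \<le> ic" by (rule inv_le) (simp add: c0_def)
    then have "(\<kappa>ef * \<Delta>max) / (\<kappa>s * (1 - \<eta>)) \<le> ic" by simp
    then show ?thesis using kappa_s eta by (simp add: pos_divide_le_eq mult.commute)
  qed
  have kef2: "\<kappa>ef \<le> \<kappa>s * (1 - \<eta>) * ic"
  proof -
    have "inverse (\<kappa>s * (1 - \<eta>) / \<kappa>ef) \<le> ic" by (rule inv_le) (simp add: c0_def)
    then have "\<kappa>ef / (\<kappa>s * (1 - \<eta>)) \<le> ic" by simp
    then show ?thesis using kappa_s eta by (simp add: pos_divide_le_eq mult.commute)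
  qed
  have key: "(f (x k) - f (x k + P k *v shat k)) /
          (mhat (f (x k)) (ghat k) (Hhat k) 0 - mhat (f (x k)) (ghat k) (Hhat k) (shat k)) \<ge> \<eta>
        \<and> sigma_m (ghat k) (Hhat k) \<ge> \<mu> * \<Delta> k"
    if kK: "k \<le> K" and wa: "well_aligned \<alpha> Pmax (grad (x k)) r (v k) (P k)" and dD: "\<Delta> k < D" for k
  proof -
    have d0: "0 < \<Delta> k" and dmax: "\<Delta> k \<le> \<Delta>max" using Dbnd[of k] by auto
    have hg: "norm (transpose (P k) *v grad (x k) - ghat k) \<le> \<kappa>eg * \<Delta> k ^ 2"
      using fq_g[of 0 k] d0 by simp
    have hh: "matnorm (transpose (P k) ** hess (x k) ** P k - Hhat k) \<le> \<kappa>eh * \<Delta> k"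
      using fq_h[of 0 k] d0 by simp
    have Xpos: "0 < ks + ic" using kspos icpos by simp
    have cpos: "0 < c"
    proof (rule ccontr)
      assume "\<not> 0 < c"
      then have "c / (ks + ic) * \<epsilon> \<le> 0"
        using Xpos eps by (simp add: divide_nonpos_pos mult_nonpos_nonneg)
      then show False using hD dD d0 by linarith
    qed
    have main1: "\<Delta> k * (ks + ic) < c * \<epsilon>"
    proof -
      have "\<Delta> k < c * \<epsilon> / (ks + ic)" using hD dD by simp
      then show ?thesis using Xpos by (simp add: pos_less_divide_eq)
    qed
    have sig: "c * \<epsilon> - ks * \<Delta> k \<le> sigma_m (ghat k) (Hhat k)"
    proof -
      have al: "0 < 1 - \<alpha>" using alpha by simp
      have c1: "c \<le> 1 - \<alpha>" and c2: "c \<le> \<theta>" unfolding c_def by auto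
      have "norm (grad (x k)) \<ge> \<epsilon> \<or> - lambda_min (hess (x k)) \<ge> \<epsilon>"
        using crit_eps[OF kK] eps unfolding crit_def by (auto simp: max_def split: if_splits)
      then show ?thesis
      proof
        assume g: "norm (grad (x k)) \<ge> \<epsilon>"
        have w1: "(1 - \<alpha>) * norm (grad (x k)) \<le> norm (transpose (P k) *v grad (x k))"
          using wa unfolding well_aligned_def by blast
        have "(1 - \<alpha>) * \<epsilon> \<le> (1 - \<alpha>) * norm (grad (x k))" using g al by (intro mult_left_mono) auto
        have "c * \<epsilon> \<le> (1 - \<alpha>) * \<epsilon>" using c1 eps by (intro mult_right_mono) auto
        have t: "norm (transpose (P k) *v grad (x k)) - norm (ghat k) \<le> \<kappa>eg * \<Delta> k ^ 2"
          using norm_triangle_ineq2[of "transpose (P k) *v grad (x k)" "ghat k"] hg by linarith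
        have "\<kappa>eg * \<Delta> k ^ 2 \<le> (\<kappa>eg * \<Delta>max) * \<Delta> k"
        proof -
          have "\<kappa>eg * \<Delta> k ^ 2 = (\<kappa>eg * \<Delta> k) * \<Delta> k" by (simp add: power2_eq_square)
          also have "\<dots> \<le> (\<kappa>eg * \<Delta>max) * \<Delta> k" using dmax kappas d0 by (intro mult_right_mono mult_left_mono) auto
          finally show ?thesis .
        qed
        moreover have "(\<kappa>eg * \<Delta>max) * \<Delta> k \<le> ks * \<Delta> k" unfolding ks_def using d0 by (intro mult_right_mono) auto
        moreover have "norm (ghat k) \<le> sigma_m (ghat k) (Hhat k)" unfolding sigma_m_def by simp
        ultimately show ?thesis using w1 t \<open>(1 - \<alpha>) * \<epsilon> \<le> _\<close> \<open>c * \<epsilon> \<le> _\<close> by linarith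
      next
        assume h: "- lambda_min (hess (x k)) \<ge> \<epsilon>"
        note dec = eig_decomp[OF kK] and orth = eig_orth[OF kK]
        have Hs: "transpose (hess (x k)) = hess (x k)" by (rule Hsym[OF dec orth])
        obtain w where w: "w \<noteq> 0" "hess (x k) *v w = lambda_min (hess (x k)) *\<^sub>R w"
          using lambda_min_in[OF Hs] unfolding eigs_def by blast
        have "lambda_min (hess (x k)) \<noteq> 0" using h eps by linarith
        then obtain j where j: "j \<in> {1..r}" "lambda_min (hess (x k)) = lam k j"
          using Heig[OF dec orth w] by blast
        have r1: "1 \<le> r" using j by simp
        have lr: "lam k r \<le> - \<epsilon>" using eig_order[OF kK, of j r] j h by simp
        define u where "u = transpose (P k) *v v k r"
        define N where "N = norm u ^ 2"
        have nu: "1 - \<alpha> \<le> norm u" using wa r1 unfolding well_aligned_def u_def by blast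
        have N1: "(1 - \<alpha>)^2 \<le> N" unfolding N_def using nu al by (intro power_mono) auto
        have Npos: "0 < N" using N1 al by (smt (verit) zero_less_power)
        have uu: "u \<bullet> u = N" unfolding N_def by (simp add: power2_norm_eq_inner)
        have u0: "u \<noteq> 0" using Npos uu by auto
        have M0: "0 \<le> M" using hess_bnd[of k] matnorm_nonneg[of "hess (x k)"] by linarith
        define Q where "Q = u \<bullet> ((transpose (P k) ** hess (x k) ** P k) *v u)"
        have Qeq: "Q = (\<Sum>i=1..r. lam k i * ((transpose (P k) *v v k i) \<bullet> u)^2)"
        proof -
          have "(transpose (P k) ** hess (x k) ** P k) *v u = transpose (P k) *v (hess (x k) *v (P k *v u))"
            by (simp only: matrix_vector_mul_assoc matrix_mul_assoc)
          then have "Q = (P k *v u) \<bullet> (hess (x k) *v (P k *v u))" unfolding Q_def by (simp only: dotT')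
          also have "\<dots> = (\<Sum>i=1..r. lam k i * (v k i \<bullet> (P k *v u))^2)" by (rule Hquad[OF dec orth])
          also have "\<dots> = (\<Sum>i=1..r. lam k i * ((transpose (P k) *v v k i) \<bullet> u)^2)" by (simp only: dotT)
          finally show ?thesis .
        qed
        have split: "{1..r} = insert r {1..<r}" using r1 by auto
        have Qb: "Q \<le> lam k r * N^2 + (real r - 1) * (M * (4 * \<alpha>^2))"
        proof -
          have "Q = lam k r * N^2 + (\<Sum>i\<in>{1..<r}. lam k i * ((transpose (P k) *v v k i) \<bullet> u)^2)"
            unfolding Qeq split using uu by (simp add: u_def)
          moreover have "(\<Sum>i\<in>{1..<r}. lam k i * ((transpose (P k) *v v k i) \<bullet> u)^2) \<le> of_nat (card {1..<r}) * (M * (4 * \<alpha>^2))"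
          proof (rule sum_bounded_above)
            fix i assume i: "i \<in> {1..<r}"
            have s4: "((transpose (P k) *v v k i) \<bullet> u)^2 \<le> 4 * \<alpha>^2"
              using wa i unfolding well_aligned_def u_def by blast
            have "lam k i \<le> matnorm (hess (x k))" using i by (intro lam_bound[OF dec orth]) auto
            then have lM: "lam k i \<le> M" using hess_bnd[of k] by linarith
            have "lam k i * ((transpose (P k) *v v k i) \<bullet> u)^2 \<le> M * ((transpose (P k) *v v k i) \<bullet> u)^2"
              using lM by (intro mult_right_mono) auto
            also have "\<dots> \<le> M * (4 * \<alpha>^2)" using s4 M0 by (intro mult_left_mono) auto
            finally show "lam k i * ((transpose (P k) *v v k i) \<bullet> u)^2 \<le> M * (4 * \<alpha>^2)" .
          qed
          moreover have "real (card {1..<r}) = real r - 1" using r1 by (simp add: of_nat_diff)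
          ultimately show ?thesis by simp
        qed
        have Hq: "u \<bullet> (Hhat k *v u) = Q - u \<bullet> ((transpose (P k) ** hess (x k) ** P k - Hhat k) *v u)"
          unfolding Q_def by (simp add: matrix_vector_mult_diff_rdistrib inner_diff_right)
        have Eb: "\<bar>u \<bullet> ((transpose (P k) ** hess (x k) ** P k - Hhat k) *v u)\<bar> \<le> \<kappa>eh * \<Delta> k * N"
        proof -
          have "\<bar>u \<bullet> ((transpose (P k) ** hess (x k) ** P k - Hhat k) *v u)\<bar>
              \<le> matnorm (transpose (P k) ** hess (x k) ** P k - Hhat k) * N"
            unfolding N_def by (rule quad_bound)
          also have "\<dots> \<le> \<kappa>eh * \<Delta> k * N" using hh Npos by (intro mult_right_mono) auto
          finally show ?thesis .
        qed
        have lh: "lambda_min (Hhat k) * N \<le> u \<bullet> (Hhat k *v u)"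
          unfolding N_def by (rule lambda_min_le[OF Hhat_sym u0])
        define Z where "Z = (real r - 1) * (M * (4 * \<alpha>^2))"
        have Z0: "0 \<le> Z" unfolding Z_def using r1 M0 by simp
        have all: "lambda_min (Hhat k) * N \<le> lam k r * N^2 + Z + \<kappa>eh * \<Delta> k * N"
          using lh Hq Eb Qb unfolding Z_def by linarith
        have all2: "lambda_min (Hhat k) \<le> lam k r * N + Z / N + \<kappa>eh * \<Delta> k"
        proof -
          have e: "(lam k r * N + Z / N + \<kappa>eh * \<Delta> k) * N = lam k r * N^2 + Z + \<kappa>eh * \<Delta> k * N"
            using Npos by (simp add: field_simps power2_eq_square)
          have "lambda_min (Hhat k) * N \<le> (lam k r * N + Z / N + \<kappa>eh * \<Delta> k) * N"
            using all e by simp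
          then show ?thesis using Npos by simp
        qed
        have b1: "lam k r * N \<le> - \<epsilon> * (1 - \<alpha>)^2"
        proof -
          have "lam k r * N \<le> - \<epsilon> * N" using lr Npos by (intro mult_right_mono) auto
          also have "\<dots> \<le> - \<epsilon> * (1 - \<alpha>)^2" using N1 eps by simp
          finally show ?thesis .
        qed
        have b2: "Z / N \<le> Z / (1 - \<alpha>)^2"
          using Z0 N1 al Npos by (intro divide_left_mono) auto
        have th: "\<theta> * \<epsilon> = \<epsilon> * (1 - \<alpha>)^2 - Z / (1 - \<alpha>)^2"
          unfolding \<theta>_def Z_def using eps al by (simp add: field_simps)
        have "c * \<epsilon> \<le> \<theta> * \<epsilon>" using c2 eps by (intro mult_right_mono) auto
        moreover have "\<kappa>eh * \<Delta> k \<le> ks * \<Delta> k" unfolding ks_def using d0 by (intro mult_right_mono) auto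
        moreover have "- lambda_min (Hhat k) \<le> sigma_m (ghat k) (Hhat k)" unfolding sigma_m_def tau_m_def by simp
        ultimately show ?thesis using all2 b1 b2 th by linarith
      qed
    qed
    have sig2: "\<Delta> k * ic < sigma_m (ghat k) (Hhat k)"
      using sig main1 by (simp add: algebra_simps)
    have sigmu: "\<mu> * \<Delta> k \<le> sigma_m (ghat k) (Hhat k)"
    proof -
      have "\<mu> * \<Delta> k \<le> ic * \<Delta> k" using mu_ic d0 by (simp add: mult_right_mono)
      then show ?thesis using sig2 by (simp add: mult.commute)
    qed
    define dec where "dec = mhat (f (x k)) (ghat k) (Hhat k) 0 - mhat (f (x k)) (ghat k) (Hhat k) (shat k)"
    have sd: "dec \<ge> \<kappa>s * max (norm (ghat k) * min (\<Delta> k) (norm (ghat k) / max (matnorm (Hhat k)) 1))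
                      (tau_m (Hhat k) * \<Delta> k ^ 2)" unfolding dec_def by (rule step_dec)
    have decgood: "0 < dec \<and> \<kappa>ef * \<Delta> k ^ 3 \<le> (1 - \<eta>) * dec"
    proof -
      have mx1: "1 \<le> max (matnorm (Hhat k)) 1" by simp
      have mx2: "max (matnorm (Hhat k)) 1 \<le> \<kappa>H" using Hhat_bnd[of k] kappaH by simp
      have eta1: "0 < 1 - \<eta>" using eta by simp
      have ksp: "0 < \<kappa>s" by (rule kappa_s)
      have "\<Delta> k * ic < norm (ghat k) \<or> \<Delta> k * ic < tau_m (Hhat k)"
        using sig2 unfolding sigma_m_def by linarith
      then show ?thesis
      proof
        assume A: "\<Delta> k * ic < norm (ghat k)"
        have "\<Delta> k * max (matnorm (Hhat k)) 1 \<le> \<Delta> k * ic"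
          using mx2 kH_ic d0 by (intro mult_left_mono) auto
        then have "\<Delta> k * max (matnorm (Hhat k)) 1 \<le> norm (ghat k)" using A by linarith
        then have "\<Delta> k \<le> norm (ghat k) / max (matnorm (Hhat k)) 1"
          using mx1 by (simp add: pos_le_divide_eq)
        then have mn: "min (\<Delta> k) (norm (ghat k) / max (matnorm (Hhat k)) 1) = \<Delta> k" by simp
        have a1: "\<kappa>s * (norm (ghat k) * \<Delta> k) \<le> dec"
        proof -
          have "\<kappa>s * (norm (ghat k) * \<Delta> k) \<le> \<kappa>s * max (norm (ghat k) * min (\<Delta> k) (norm (ghat k) / max (matnorm (Hhat k)) 1))
                      (tau_m (Hhat k) * \<Delta> k ^ 2)" using ksp mn by (intro mult_left_mono) auto
          then show ?thesis using sd by linarith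
        qed
        have a2: "\<kappa>s * ((\<Delta> k * ic) * \<Delta> k) \<le> \<kappa>s * (norm (ghat k) * \<Delta> k)"
          using A ksp d0 by (intro mult_left_mono mult_right_mono) auto
        have p: "0 < \<kappa>s * ((\<Delta> k * ic) * \<Delta> k)" using ksp d0 icpos by simp
        have "\<kappa>ef * \<Delta> k ^ 3 \<le> (\<kappa>ef * \<Delta>max) * \<Delta> k ^ 2"
        proof -
          have "\<kappa>ef * \<Delta> k ^ 3 = (\<kappa>ef * \<Delta> k) * \<Delta> k ^ 2" by (simp add: power2_eq_square power3_eq_cube)
          also have "\<dots> \<le> (\<kappa>ef * \<Delta>max) * \<Delta> k ^ 2" using dmax kappas by (intro mult_right_mono mult_left_mono) auto
          finally show ?thesis .
        qed
        also have "\<dots> \<le> (\<kappa>s * (1 - \<eta>) * ic) * \<Delta> k ^ 2" using kef1 by (intro mult_right_mono) auto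
        also have "\<dots> = (1 - \<eta>) * (\<kappa>s * ((\<Delta> k * ic) * \<Delta> k))" by (simp add: power2_eq_square mult_ac)
        also have "\<dots> \<le> (1 - \<eta>) * dec" using a1 a2 eta1 by (intro mult_left_mono) auto
        finally show ?thesis using a1 a2 p by linarith
      next
        assume B: "\<Delta> k * ic < tau_m (Hhat k)"
        have a1: "\<kappa>s * (tau_m (Hhat k) * \<Delta> k ^ 2) \<le> dec"
        proof -
          have "\<kappa>s * (tau_m (Hhat k) * \<Delta> k ^ 2) \<le> \<kappa>s * max (norm (ghat k) * min (\<Delta> k) (norm (ghat k) / max (matnorm (Hhat k)) 1))
                      (tau_m (Hhat k) * \<Delta> k ^ 2)" using ksp by (intro mult_left_mono) auto
          then show ?thesis using sd by linarith
        qed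
        have a2: "\<kappa>s * ((\<Delta> k * ic) * \<Delta> k ^ 2) \<le> \<kappa>s * (tau_m (Hhat k) * \<Delta> k ^ 2)"
          using B ksp d0 by (intro mult_left_mono mult_right_mono) auto
        have p: "0 < \<kappa>s * ((\<Delta> k * ic) * \<Delta> k ^ 2)" using ksp d0 icpos by simp
        have "\<kappa>ef * \<Delta> k ^ 3 \<le> (\<kappa>s * (1 - \<eta>) * ic) * \<Delta> k ^ 3" using kef2 d0 by (intro mult_right_mono) auto
        also have "\<dots> = (1 - \<eta>) * (\<kappa>s * ((\<Delta> k * ic) * \<Delta> k ^ 2))" by (simp add: power2_eq_square power3_eq_cube mult_ac)
        also have "\<dots> \<le> (1 - \<eta>) * dec" using a1 a2 eta1 by (intro mult_left_mono) auto
        finally show ?thesis using a1 a2 p by linarith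
      qed
    qed
    have fdiff: "f (x k + P k *v shat k) - mhat (f (x k)) (ghat k) (Hhat k) (shat k) \<le> \<kappa>ef * \<Delta> k ^ 3"
      using fq_f[OF step_tr[of k]] by simp
    have m0: "mhat (f (x k)) (ghat k) (Hhat k) 0 = f (x k)" by (simp add: mhat_def)
    have "\<eta> * dec \<le> f (x k) - f (x k + P k *v shat k)"
      using fdiff decgood m0 unfolding dec_def by (simp add: algebra_simps)
    then have "\<eta> \<le> (f (x k) - f (x k + P k *v shat k)) / dec"
      using decgood by (simp add: pos_le_divide_eq)
    then show ?thesis using sigmu unfolding dec_def by simp
  qed
  have "{k. k \<le> K \<and> well_aligned \<alpha> Pmax (grad (x k)) r (v k) (P k)}
            \<inter> {k. k \<le> K \<and> \<Delta> k < D}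
            \<inter> {k. k \<le> K \<and> \<not> ((f (x k) - f (x k + P k *v shat k)) /
                 (mhat (f (x k)) (ghat k) (Hhat k) 0 - mhat (f (x k)) (ghat k) (Hhat k) (shat k)) \<ge> \<eta>
                 \<and> sigma_m (ghat k) (Hhat k) \<ge> \<mu> * \<Delta> k)} = {}"
    using key by blast
  then show "card ({k. k \<le> K \<and> well_aligned \<alpha> Pmax (grad (x k)) r (v k) (P k)}
            \<inter> {k. k \<le> K \<and> \<Delta> k < D}
            \<inter> {k. k \<le> K \<and> \<not> ((f (x k) - f (x k + P k *v shat k)) /
                 (mhat (f (x k)) (ghat k) (Hhat k) 0 - mhat (f (x k)) (ghat k) (Hhat k) (shat k)) \<ge> \<eta>
                 \<and> sigma_m (ghat k) (Hhat k) \<ge> \<mu> * \<Delta> k)}) = 0" by simp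
qed

end
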